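(* Let $\pi$ be an $r$-homogeneous strongly log-concave distribution with $r\ge 2$ and associated matroid $\mathcal{M}$. Let $f^{(2)}:\mathcal{M}(2)\to\mathbb{R}_{\ge0}$ and $f^{(1)}=P^{\uparrow}_1 f^{(2)}$, i.e. $f^{(1)}(v)=\sum_{S\in\mathcal{M}(2),v\in S}\frac{w(S)}{w(\{v\})}f^{(2)}(S)$. Then $$\mathrm{Ent}_{\pi_2}(f^{(2)})\ge 2\,\mathrm{Ent}_{\pi_1}(f^{(1)}).$$
   Context: $\pi:2^{[n]}\to\mathbb{R}_{\ge0}$ has generating polynomial $g_\pi(x)=\sum_S\pi(S)\prod_{i\in S}x_i$; $r$-homogeneous means the support consists of $r$-sets; strongly log-concave means for every $J\subseteq[n]$, $\nabla^2\log(\partial_J g_\pi)$ is negative semidefinite at the all-ones vector. The support $\mathcal{B}$ is the set of bases of a rank-$r$ matroid $\mathcal{M}=(E,\mathcal{I})$; $\mathcal{M}(k)$ = independent sets of size $k$. Weights: $w(I)=(r-|I|)!\sum_{B\in\mathcal{B},B\supseteq I}\pi(B)$ for $I\in\mathcal{I}$; $\pi_k(I)=w(I)/\sum_{I'\in\mathcal{M}(k)}w(I')$ on $\mathcal{M}(k)$ (identify $\mathcal{M}(1)$ with elements $v$). $\mathrm{Ent}_\mu(f)=\mathbb{E}_\mu(f\log f)-\mathbb{E}_\mu f\log\mathbb{E}_\mu f$ with $0\log0=0$. *)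

theory Defs
  imports Complex_Main
begin

text \<open>Multi-affine polynomials in the variables indexed by a finite ground set E are
represented by their coefficient function q :: 'a set \<Rightarrow> real
(coefficient of the monomial prod_{i in S} x_i).\<close>

definition mpoly_eval :: "'a set \<Rightarrow> ('a set \<Rightarrow> real) \<Rightarrow> ('a \<Rightarrow> real) \<Rightarrow> real" where
  "mpoly_eval E q x = (\<Sum>S\<in>Pow E. q S * (\<Prod>i\<in>S. x i))"

definition mpoly_partial :: "'a \<Rightarrow> ('a set \<Rightarrow> real) \<Rightarrow> ('a set \<Rightarrow> real)" where
  "mpoly_partial i q = (\<lambda>T. if i \<in> T then 0 else q (insert i T))"

definition mpoly_partial_set :: "'a set \<Rightarrow> ('a set \<Rightarrow> real) \<Rightarrow> ('a set \<Rightarrow> real)" where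
  "mpoly_partial_set J q = (\<lambda>T. if T \<inter> J = {} then q (T \<union> J) else 0)"

text \<open>Entry (i,j) of the Hessian of log h at the all-ones vector, where h is the
multi-affine polynomial with coefficients q:
  (h * d_i d_j h - d_i h * d_j h) / h^2.\<close>
definition log_hessian_at_ones :: "'a set \<Rightarrow> ('a set \<Rightarrow> real) \<Rightarrow> 'a \<Rightarrow> 'a \<Rightarrow> real" where
  "log_hessian_at_ones E q i j =
     (let h = mpoly_eval E q (\<lambda>_. 1);
          hi = mpoly_eval E (mpoly_partial i q) (\<lambda>_. 1);
          hj = mpoly_eval E (mpoly_partial j q) (\<lambda>_. 1);
          hij = mpoly_eval E (mpoly_partial i (mpoly_partial j q)) (\<lambda>_. 1)
      in (h * hij - hi * hj) / h\<^sup>2)"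

text \<open>Strong log-concavity of the generating polynomial g_pi: for every J subset of E,
the Hessian of log(d_J g_pi) at the all-ones vector is negative semidefinite
(whenever d_J g_pi is not the zero polynomial, i.e. its value at ones is positive;
the zero polynomial is log-concave by convention).\<close>
definition strongly_log_concave :: "'a set \<Rightarrow> ('a set \<Rightarrow> real) \<Rightarrow> bool" where
  "strongly_log_concave E \<pi> \<longleftrightarrow>
     (\<forall>J\<subseteq>E. mpoly_eval E (mpoly_partial_set J \<pi>) (\<lambda>_. 1) > 0 \<longrightarrow>
        (\<forall>c::'a \<Rightarrow> real. (\<Sum>i\<in>E. \<Sum>j\<in>E. c i * c j *
            log_hessian_at_ones E (mpoly_partial_set J \<pi>) i j) \<le> 0))"

definition homogeneous_distribution :: "'a set \<Rightarrow> nat \<Rightarrow> ('a set \<Rightarrow> real) \<Rightarrow> bool" where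
  "homogeneous_distribution E r \<pi> \<longleftrightarrow>
     (\<forall>S. \<pi> S \<ge> 0) \<and> (\<forall>S. \<pi> S \<noteq> 0 \<longrightarrow> S \<subseteq> E \<and> card S = r) \<and>
     (\<Sum>S\<in>Pow E. \<pi> S) = 1"

text \<open>Bases of the associated matroid = support of pi; independent sets = subsets of bases.\<close>
definition bases :: "'a set \<Rightarrow> ('a set \<Rightarrow> real) \<Rightarrow> 'a set set" where
  "bases E \<pi> = {B. B \<subseteq> E \<and> \<pi> B \<noteq> 0}"

definition indep :: "'a set \<Rightarrow> ('a set \<Rightarrow> real) \<Rightarrow> 'a set \<Rightarrow> bool" where
  "indep E \<pi> I \<longleftrightarrow> (\<exists>B\<in>bases E \<pi>. I \<subseteq> B)"

definition level :: "'a set \<Rightarrow> ('a set \<Rightarrow> real) \<Rightarrow> nat \<Rightarrow> 'a set set" where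
  "level E \<pi> k = {I. indep E \<pi> I \<and> card I = k}"

definition weight :: "'a set \<Rightarrow> nat \<Rightarrow> ('a set \<Rightarrow> real) \<Rightarrow> 'a set \<Rightarrow> real" where
  "weight E r \<pi> I = fact (r - card I) * (\<Sum>B\<in>{B\<in>bases E \<pi>. I \<subseteq> B}. \<pi> B)"

definition pi_k :: "'a set \<Rightarrow> nat \<Rightarrow> ('a set \<Rightarrow> real) \<Rightarrow> nat \<Rightarrow> 'a set \<Rightarrow> real" where
  "pi_k E r \<pi> k I = weight E r \<pi> I / (\<Sum>I'\<in>level E \<pi> k. weight E r \<pi> I')"

definition xlogx :: "real \<Rightarrow> real" where
  "xlogx t = (if t = 0 then 0 else t * ln t)"

definition Ent :: "'b set \<Rightarrow> ('b \<Rightarrow> real) \<Rightarrow> ('b \<Rightarrow> real) \<Rightarrow> real" where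
  "Ent X \<mu> f = (\<Sum>x\<in>X. \<mu> x * xlogx (f x)) - xlogx (\<Sum>x\<in>X. \<mu> x * f x)"

definition up1 :: "'a set \<Rightarrow> nat \<Rightarrow> ('a set \<Rightarrow> real) \<Rightarrow> ('a set \<Rightarrow> real) \<Rightarrow> 'a \<Rightarrow> real" where
  "up1 E r \<pi> f2 v = (\<Sum>S\<in>{S\<in>level E \<pi> 2. v \<in> S}.
       weight E r \<pi> S / weight E r \<pi> {v} * f2 S)"

end

theory Submission
  imports Defs
begin


locale setup_slc =
  fixes E :: "'a set" and r :: nat and \<pi> :: "'a set \<Rightarrow> real"
  assumes finE: "finite E" and r2: "r \<ge> 2" and hom: "homogeneous_distribution E r \<pi>"
begin

definition Q :: "'a set \<Rightarrow> real" where
  "Q A = (\<Sum>B\<in>{B\<in>Pow E. A \<subseteq> B}. \<pi> B)"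

lemma pi_nonneg: "\<pi> S \<ge> 0" using hom by (simp add: homogeneous_distribution_def)
lemma pi_supp: "\<pi> S \<noteq> 0 \<Longrightarrow> S \<subseteq> E \<and> card S = r" using hom by (simp add: homogeneous_distribution_def)
lemma pi_sum: "(\<Sum>S\<in>Pow E. \<pi> S) = 1" using hom by (simp add: homogeneous_distribution_def)

lemma Q_nonneg: "Q A \<ge> 0" unfolding Q_def by (intro sum_nonneg pi_nonneg)

lemma Q_bases: "(\<Sum>B\<in>{B\<in>bases E \<pi>. I \<subseteq> B}. \<pi> B) = Q I"
  unfolding Q_def
  by (rule sum.mono_neutral_left) (auto simp: finE bases_def)

lemma Q_empty: "Q {} = 1" using pi_sum by (simp add: Q_def Pow_def)

lemma Q_pos: assumes "indep E \<pi> I" shows "Q I > 0"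
proof -
  obtain B where B: "B \<in> bases E \<pi>" "I \<subseteq> B" using assms by (auto simp: indep_def)
  have "\<pi> B > 0" using B pi_nonneg[of B] by (auto simp: bases_def order_le_less)
  also have "\<pi> B \<le> Q I" unfolding Q_def
    by (rule member_le_sum) (use B finE in \<open>auto simp: bases_def intro: pi_nonneg\<close>)
  finally show ?thesis .
qed

lemma Q_zero: assumes "\<not> indep E \<pi> I" shows "Q I = 0"
  unfolding Q_def
proof (rule sum.neutral)
  show "\<forall>B\<in>{B \<in> Pow E. I \<subseteq> B}. \<pi> B = 0" using assms by (auto simp: indep_def bases_def)
qed

lemma level_finite: "finite (level E \<pi> k)"
proof -
  have "level E \<pi> k \<subseteq> Pow E" by (auto simp: level_def indep_def bases_def)
  then show ?thesis using finite_subset finE by blast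
qed

lemma level_sub: "I \<in> level E \<pi> k \<Longrightarrow> I \<subseteq> E"
  by (auto simp: level_def indep_def bases_def)

lemma weight_eq: "weight E r \<pi> I = fact (r - card I) * Q I"
  by (simp add: weight_def Q_bases)

lemma sum_Q_single: "(\<Sum>i\<in>E. Q {i}) = r"
proof -
  have "(\<Sum>i\<in>E. Q {i}) = (\<Sum>i\<in>E. \<Sum>B\<in>{B\<in>Pow E. i \<in> B}. \<pi> B)" by (simp add: Q_def)
  also have "\<dots> = (\<Sum>B\<in>Pow E. \<Sum>i\<in>{i\<in>E. i \<in> B}. \<pi> B)"
    using sum.swap_restrict[of E "Pow E" "\<lambda>i B. \<pi> B" "\<lambda>i B. i \<in> B"] finE by simp
  also have "\<dots> = (\<Sum>B\<in>Pow E. r * \<pi> B)"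
  proof (rule sum.cong)
    fix B assume B: "B \<in> Pow E"
    have "{i\<in>E. i \<in> B} = B" using B by auto
    then show "(\<Sum>i\<in>{i\<in>E. i \<in> B}. \<pi> B) = r * \<pi> B"
      using pi_supp[of B] by (cases "\<pi> B = 0") auto
  qed simp
  also have "\<dots> = r" using pi_sum by (simp add: sum_distrib_left[symmetric])
  finally show ?thesis .
qed

lemma sum_Q_pair: assumes i: "i \<in> E"
  shows "(\<Sum>j\<in>E. if i = j then 0 else Q {i, j}) = (real r - 1) * Q {i}"
proof -
  have "(\<Sum>j\<in>E. if i = j then 0 else Q {i, j}) = (\<Sum>j\<in>E - {i}. Q {i, j})"
    using finE i by (simp add: sum.If_cases Diff_eq[symmetric])
  also have "\<dots> = (\<Sum>j\<in>E - {i}. \<Sum>B\<in>{B\<in>Pow E. {i,j} \<subseteq> B}. \<pi> B)" by (simp add: Q_def)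
  also have "\<dots> = (\<Sum>B\<in>Pow E. \<Sum>j\<in>{j\<in>E - {i}. {i,j} \<subseteq> B}. \<pi> B)"
    using sum.swap_restrict[of "E - {i}" "Pow E" "\<lambda>j B. \<pi> B" "\<lambda>j B. {i,j} \<subseteq> B"] finE by simp
  also have "\<dots> = (\<Sum>B\<in>{B\<in>Pow E. i \<in> B}. (real r - 1) * \<pi> B)"
  proof (rule sum.mono_neutral_cong_right)
    show "\<forall>B\<in>Pow E - {B\<in>Pow E. i \<in> B}. (\<Sum>j\<in>{j\<in>E - {i}. {i,j} \<subseteq> B}. \<pi> B) = 0"
    proof
      fix B assume B: "B \<in> Pow E - {B\<in>Pow E. i \<in> B}"
      then have "{j\<in>E - {i}. {i,j} \<subseteq> B} = {}" by auto
      then show "(\<Sum>j\<in>{j\<in>E - {i}. {i,j} \<subseteq> B}. \<pi> B) = 0" by (metis sum.empty)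
    qed
  next
    fix B assume B: "B \<in> {B\<in>Pow E. i \<in> B}"
    have e: "{j\<in>E - {i}. {i,j} \<subseteq> B} = B - {i}" using B by auto
    have "finite B" using B finE finite_subset by auto
    then show "(\<Sum>j\<in>{j\<in>E - {i}. {i,j} \<subseteq> B}. \<pi> B) = (real r - 1) * \<pi> B"
      using pi_supp[of B] B r2 unfolding e by (cases "\<pi> B = 0") (auto simp: of_nat_diff)
  qed (use finE in auto)
  also have "\<dots> = (real r - 1) * Q {i}" by (simp add: Q_def sum_distrib_left)
  finally show ?thesis .
qed

end


lemma eval_partial_set:
  assumes "finite E" "A \<subseteq> E"
  shows "mpoly_eval E (mpoly_partial_set A q) (\<lambda>_. 1) = (\<Sum>B\<in>{B\<in>Pow E. A \<subseteq> B}. q B)"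
proof -
  have "mpoly_eval E (mpoly_partial_set A q) (\<lambda>_. 1) =
        (\<Sum>T\<in>Pow E. if T \<inter> A = {} then q (T \<union> A) else 0)"
    by (simp add: mpoly_eval_def mpoly_partial_set_def)
  also have "\<dots> = (\<Sum>T\<in>{T\<in>Pow E. T \<inter> A = {}}. q (T \<union> A))"
    using assms by (simp add: sum.If_cases Int_def)
  also have "\<dots> = (\<Sum>B\<in>{B\<in>Pow E. A \<subseteq> B}. q B)"
  proof (rule sum.reindex_bij_betw)
    show "bij_betw (\<lambda>T. T \<union> A) {T\<in>Pow E. T \<inter> A = {}} {B\<in>Pow E. A \<subseteq> B}"
    proof (rule bij_betw_byWitness[where f' = "\<lambda>B. B - A"])
    qed (use assms in auto)
  qed
  finally show ?thesis .
qed

lemma partial_single: "mpoly_partial i q = mpoly_partial_set {i} q"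
  by (auto simp: mpoly_partial_def mpoly_partial_set_def fun_eq_iff)

lemma partial_pair: "i \<noteq> j \<Longrightarrow> mpoly_partial i (mpoly_partial j q) = mpoly_partial_set {i, j} q"
  by (auto simp: mpoly_partial_def mpoly_partial_set_def fun_eq_iff insert_commute)

lemma partial_same: "mpoly_partial i (mpoly_partial i q) = (\<lambda>_. 0)"
  by (auto simp: mpoly_partial_def fun_eq_iff)

context setup_slc begin

lemma hess_eq: assumes "i \<in> E" "j \<in> E"
  shows "log_hessian_at_ones E \<pi> i j = (if i = j then 0 else Q {i, j}) - Q {i} * Q {j}"
proof -
  have h: "mpoly_eval E \<pi> (\<lambda>_. 1) = 1"
    using eval_partial_set[OF finE, of "{}" \<pi>] Q_empty by (simp add: mpoly_partial_set_def Q_def)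
  have hi: "mpoly_eval E (mpoly_partial k \<pi>) (\<lambda>_. 1) = Q {k}" if "k \<in> E" for k
    using eval_partial_set[OF finE, of "{k}" \<pi>] that by (simp add: partial_single Q_def)
  have hij: "mpoly_eval E (mpoly_partial i (mpoly_partial j \<pi>)) (\<lambda>_. 1) = (if i = j then 0 else Q {i, j})"
  proof (cases "i = j")
    case True then show ?thesis by (simp add: partial_same mpoly_eval_def)
  next
    case False then show ?thesis
      using eval_partial_set[OF finE, of "{i,j}" \<pi>] assms by (simp add: partial_pair Q_def)
  qed
  show ?thesis unfolding log_hessian_at_ones_def Let_def h hij hi[OF assms(1)] hi[OF assms(2)] by simp
qed

lemma slc_quad:
  assumes slc: "strongly_log_concave E \<pi>"
  shows "(\<Sum>i\<in>E. \<Sum>j\<in>E. c i * c j * (if i = j then 0 else Q {i, j})) \<le> (\<Sum>i\<in>E. c i * Q {i})\<^sup>2"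
proof -
  have e: "mpoly_partial_set {} \<pi> = \<pi>" by (simp add: mpoly_partial_set_def)
  have h: "mpoly_eval E \<pi> (\<lambda>_. 1) = 1"
    using eval_partial_set[OF finE, of "{}" \<pi>] Q_empty by (simp add: mpoly_partial_set_def Q_def)
  have "(\<Sum>i\<in>E. \<Sum>j\<in>E. c i * c j * log_hessian_at_ones E \<pi> i j) \<le> 0"
    using slc unfolding strongly_log_concave_def using e h by force
  also have "(\<Sum>i\<in>E. \<Sum>j\<in>E. c i * c j * log_hessian_at_ones E \<pi> i j) =
     (\<Sum>i\<in>E. \<Sum>j\<in>E. c i * c j * (if i = j then 0 else Q {i, j})) - (\<Sum>i\<in>E. \<Sum>j\<in>E. (c i * Q {i}) * (c j * Q {j}))"
    by (simp add: hess_eq right_diff_distrib sum_subtractf algebra_simps)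
  also have "(\<Sum>i\<in>E. \<Sum>j\<in>E. (c i * Q {i}) * (c j * Q {j})) = (\<Sum>i\<in>E. c i * Q {i})\<^sup>2"
    by (simp add: power2_eq_square sum_product)
  finally show ?thesis by simp
qed

end


context setup_slc begin

definition K :: "'a \<Rightarrow> 'a \<Rightarrow> real" where "K i j = (if i = j then 0 else Q {i, j})"

lemma K_sym: "K i j = K j i" by (simp add: K_def insert_commute)

lemma K_row: "i \<in> E \<Longrightarrow> (\<Sum>j\<in>E. K i j) = (real r - 1) * Q {i}"
  using sum_Q_pair by (simp add: K_def)

lemma K_col: "j \<in> E \<Longrightarrow> (\<Sum>i\<in>E. K i j) = (real r - 1) * Q {j}"
  using K_row[of j] by (simp add: K_sym)

lemma quad_bound:
  assumes slc: "strongly_log_concave E \<pi>"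
  shows "(\<Sum>i\<in>E. \<Sum>j\<in>E. z i * z j * K i j) \<le> (real r - 1) / real r * (\<Sum>i\<in>E. z i * Q {i})\<^sup>2"
proof -
  define s where "s = (\<Sum>i\<in>E. z i * Q {i})"
  define t where "t = s / real r"
  have rpos: "real r > 0" using r2 by simp
  define c where "c i = z i - t" for i
  have "(\<Sum>i\<in>E. \<Sum>j\<in>E. c i * c j * K i j) \<le> (\<Sum>i\<in>E. c i * Q {i})\<^sup>2"
    using slc_quad[OF slc, of c] by (simp add: K_def)
  also have "(\<Sum>i\<in>E. c i * Q {i}) = s - t * (\<Sum>i\<in>E. Q {i})"
    by (simp add: c_def s_def left_diff_distrib sum_subtractf sum_distrib_left)
  also have "\<dots> = 0" using rpos by (simp add: sum_Q_single t_def)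
  finally have A: "(\<Sum>i\<in>E. \<Sum>j\<in>E. c i * c j * K i j) \<le> 0" by simp
  have S1: "(\<Sum>i\<in>E. \<Sum>j\<in>E. z i * K i j) = (real r - 1) * s"
    by (simp add: sum_distrib_left[symmetric] K_row s_def sum_distrib_left algebra_simps cong: sum.cong)
  have S2: "(\<Sum>i\<in>E. \<Sum>j\<in>E. z j * K i j) = (real r - 1) * s"
  proof -
    have "(\<Sum>i\<in>E. \<Sum>j\<in>E. z j * K i j) = (\<Sum>j\<in>E. \<Sum>i\<in>E. z j * K i j)" by (rule sum.swap)
    also have "\<dots> = (\<Sum>j\<in>E. z j * ((real r - 1) * Q {j}))"
      by (simp add: sum_distrib_left[symmetric] K_col)
    finally show ?thesis by (simp add: s_def sum_distrib_left algebra_simps)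
  qed
  have S3: "(\<Sum>i\<in>E. \<Sum>j\<in>E. K i j) = (real r - 1) * real r"
    by (simp add: K_row sum_distrib_left[symmetric] sum_Q_single)
  have "(\<Sum>i\<in>E. \<Sum>j\<in>E. c i * c j * K i j) =
     (\<Sum>i\<in>E. \<Sum>j\<in>E. z i * z j * K i j) - t * (\<Sum>i\<in>E. \<Sum>j\<in>E. z i * K i j)
       - t * (\<Sum>i\<in>E. \<Sum>j\<in>E. z j * K i j) + t\<^sup>2 * (\<Sum>i\<in>E. \<Sum>j\<in>E. K i j)"
    by (simp add: c_def sum_distrib_left sum_subtractf sum.distrib power2_eq_square algebra_simps)
  also have "\<dots> = (\<Sum>i\<in>E. \<Sum>j\<in>E. z i * z j * K i j) - (real r - 1) * s\<^sup>2 / real r"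
    unfolding S1 S2 S3 t_def using rpos by (simp add: field_simps power2_eq_square)
  finally show ?thesis using A by (simp add: s_def)
qed

end


lemma pair_sum_conv:
  fixes G :: "'a set \<Rightarrow> real"
  assumes "finite E"
  shows "(\<Sum>u\<in>E. \<Sum>v\<in>E. if u = v then 0 else G {u, v}) = 2 * (\<Sum>S\<in>{S\<in>Pow E. card S = 2}. G S)"
proof -
  have "(\<Sum>u\<in>E. \<Sum>v\<in>E. if u = v then 0 else G {u, v}) = (\<Sum>u\<in>E. \<Sum>v\<in>E - {u}. G {u, v})"
  proof (rule sum.cong)
    fix u assume "u \<in> E"
    then show "(\<Sum>v\<in>E. if u = v then 0 else G {u, v}) = (\<Sum>v\<in>E - {u}. G {u, v})"
      using assms by (simp add: sum.If_cases Diff_eq)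
  qed simp
  also have "\<dots> = (\<Sum>u\<in>E. \<Sum>S\<in>{S\<in>Pow E. card S = 2 \<and> u \<in> S}. G S)"
  proof (rule sum.cong)
    fix u assume u: "u \<in> E"
    show "(\<Sum>v\<in>E - {u}. G {u, v}) = (\<Sum>S\<in>{S\<in>Pow E. card S = 2 \<and> u \<in> S}. G S)"
    proof (rule sum.reindex_bij_betw)
      show "bij_betw (\<lambda>v. {u, v}) (E - {u}) {S\<in>Pow E. card S = 2 \<and> u \<in> S}"
      proof (rule bij_betw_byWitness[where f' = "\<lambda>S. the_elem (S - {u})"])
        show "\<forall>a\<in>E - {u}. the_elem ({u, a} - {u}) = a" by (auto simp: insert_Diff_if)
        show "\<forall>a'\<in>{S \<in> Pow E. card S = 2 \<and> u \<in> S}. {u, the_elem (a' - {u})} = a'"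
        proof
          fix S assume S: "S \<in> {S \<in> Pow E. card S = 2 \<and> u \<in> S}"
          then obtain x y where xy: "S = {x, y}" "x \<noteq> y" by (auto simp: card_2_iff)
          then show "{u, the_elem (S - {u})} = S" using S by (auto simp: insert_Diff_if)
        qed
        show "(\<lambda>v. {u, v}) ` (E - {u}) \<subseteq> {S \<in> Pow E. card S = 2 \<and> u \<in> S}" using u by auto
        show "(\<lambda>S. the_elem (S - {u})) ` {S \<in> Pow E. card S = 2 \<and> u \<in> S} \<subseteq> E - {u}"
        proof
          fix a assume "a \<in> (\<lambda>S. the_elem (S - {u})) ` {S \<in> Pow E. card S = 2 \<and> u \<in> S}"
          then obtain S where S: "S \<in> Pow E" "card S = 2" "u \<in> S" and a: "a = the_elem (S - {u})" by auto
          then obtain x y where xy: "S = {x, y}" "x \<noteq> y" by (auto simp: card_2_iff)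
          then show "a \<in> E - {u}" using S a by (auto simp: insert_Diff_if)
        qed
      qed
    qed
  qed simp
  also have "\<dots> = (\<Sum>S\<in>{S\<in>Pow E. card S = 2}. \<Sum>u\<in>{u\<in>E. u \<in> S}. G S)"
    using sum.swap_restrict[of E "{S\<in>Pow E. card S = 2}" "\<lambda>u S. G S" "\<lambda>u S. u \<in> S"] assms
    by (simp add: conj_ac)
  also have "\<dots> = (\<Sum>S\<in>{S\<in>Pow E. card S = 2}. 2 * G S)"
  proof (rule sum.cong)
    fix S assume "S \<in> {S\<in>Pow E. card S = 2}"
    then have "{u\<in>E. u \<in> S} = S" "card S = 2" by auto
    then show "(\<Sum>u\<in>{u\<in>E. u \<in> S}. G S) = 2 * G S" by simp
  qed simp
  finally show ?thesis by (simp add: sum_distrib_left)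
qed

context setup_slc begin

lemma level2_sum:
  assumes "\<And>S. Q S = 0 \<Longrightarrow> g S = 0"
  shows "(\<Sum>S\<in>level E \<pi> 2. g S) = (\<Sum>S\<in>{S\<in>Pow E. card S = 2}. g S)"
proof (rule sum.mono_neutral_left)
  show "finite {S\<in>Pow E. card S = 2}" using finE by simp
  show "level E \<pi> 2 \<subseteq> {S\<in>Pow E. card S = 2}" using level_sub by (auto simp: level_def)
  show "\<forall>S\<in>{S\<in>Pow E. card S = 2} - level E \<pi> 2. g S = 0"
    using Q_zero assms by (auto simp: level_def)
qed

lemma level2_quad: "(\<Sum>S\<in>level E \<pi> 2. Q S * (\<Prod>v\<in>S. z v)) = (\<Sum>i\<in>E. \<Sum>j\<in>E. z i * z j * K i j) / 2"
proof -
  have "(\<Sum>i\<in>E. \<Sum>j\<in>E. z i * z j * K i j) = (\<Sum>i\<in>E. \<Sum>j\<in>E. if i = j then 0 else Q {i, j} * (\<Prod>v\<in>{i,j}. z v))"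
    by (intro sum.cong refl) (simp add: K_def)
  also have "\<dots> = 2 * (\<Sum>S\<in>{S\<in>Pow E. card S = 2}. Q S * (\<Prod>v\<in>S. z v))"
    by (rule pair_sum_conv[OF finE])
  also have "(\<Sum>S\<in>{S\<in>Pow E. card S = 2}. Q S * (\<Prod>v\<in>S. z v)) = (\<Sum>S\<in>level E \<pi> 2. Q S * (\<Prod>v\<in>S. z v))"
    by (rule level2_sum[symmetric]) simp
  finally show ?thesis by simp
qed

lemma level2_Qsum: "(\<Sum>S\<in>level E \<pi> 2. Q S) = real r * (real r - 1) / 2"
proof -
  have "(\<Sum>S\<in>level E \<pi> 2. Q S) = (\<Sum>S\<in>level E \<pi> 2. Q S * (\<Prod>v\<in>S. (\<lambda>_. 1::real) v))" by simp
  also have "\<dots> = (\<Sum>i\<in>E. \<Sum>j\<in>E. K i j) / 2" unfolding level2_quad by simp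
  also have "\<dots> = real r * (real r - 1) / 2"
    by (simp add: K_row sum_distrib_left[symmetric] sum_Q_single)
  finally show ?thesis .
qed

definition V where "V = {v\<in>E. {v} \<in> level E \<pi> 1}"

lemma V_finite: "finite V" using finE by (simp add: V_def)

lemma level1_eq: "level E \<pi> 1 = (\<lambda>v. {v}) ` V"
  using level_sub by (auto simp: level_def V_def card_1_singleton_iff)

lemma V_sum: "(\<Sum>v\<in>V. Q {v} * g v) = (\<Sum>v\<in>E. Q {v} * g v)"
proof (rule sum.mono_neutral_left)
  show "finite E" by (rule finE)
  show "V \<subseteq> E" by (auto simp: V_def)
  show "\<forall>v\<in>E - V. Q {v} * g v = 0" using Q_zero by (auto simp: V_def level_def)
qed

lemma level1_Qsum: "(\<Sum>I\<in>level E \<pi> 1. Q I) = real r"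
proof -
  have "(\<Sum>I\<in>level E \<pi> 1. Q I) = (\<Sum>v\<in>V. Q {v})"
    unfolding level1_eq by (rule sum.reindex_cong[where l = "\<lambda>v. {v}"]) (auto simp: inj_on_def)
  also have "\<dots> = (\<Sum>v\<in>E. Q {v})" using V_sum[of "\<lambda>_. 1"] by simp
  finally show ?thesis using sum_Q_single by simp
qed

lemma pi1_eq: "pi_k E r \<pi> 1 {v} = Q {v} / real r"
proof -
  have "(\<Sum>I\<in>level E \<pi> 1. weight E r \<pi> I) = (\<Sum>I\<in>level E \<pi> 1. fact (r - 1) * Q I)"
    by (rule sum.cong) (auto simp: weight_eq level_def)
  also have "\<dots> = fact (r - 1) * (\<Sum>I\<in>level E \<pi> 1. Q I)" by (rule sum_distrib_left[symmetric])
  also have "\<dots> = fact (r - 1) * real r" by (simp only: level1_Qsum)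
  finally have Z: "(\<Sum>I\<in>level E \<pi> 1. weight E r \<pi> I) = fact (r - 1) * real r" .
  show ?thesis unfolding pi_k_def Z by (simp add: weight_eq)
qed

lemma pi2_eq: assumes "card S = 2" shows "pi_k E r \<pi> 2 S = 2 * Q S / (real r * (real r - 1))"
proof -
  have "(\<Sum>I\<in>level E \<pi> 2. weight E r \<pi> I) = (\<Sum>I\<in>level E \<pi> 2. fact (r - 2) * Q I)"
    by (rule sum.cong) (auto simp: weight_eq level_def)
  also have "\<dots> = fact (r - 2) * (\<Sum>I\<in>level E \<pi> 2. Q I)" by (rule sum_distrib_left[symmetric])
  also have "\<dots> = fact (r - 2) * (real r * (real r - 1) / 2)" by (simp only: level2_Qsum)
  finally have Z: "(\<Sum>I\<in>level E \<pi> 2. weight E r \<pi> I) = fact (r - 2) * (real r * (real r - 1) / 2)" .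
  show ?thesis unfolding pi_k_def Z using assms by (simp add: weight_eq)
qed

end


lemma xlogx_eq: "xlogx t = t * ln t" by (simp add: xlogx_def)

lemma term_ineq:
  fixes a b m L :: real
  assumes a: "a \<ge> 0" and b: "b \<ge> 0" and m: "m \<ge> 0"
    and ab: "a > 0 \<Longrightarrow> b > 0 \<and> L = ln b" and am: "m = 0 \<Longrightarrow> a = 0"
  shows "xlogx a - a * L + a * ln m \<ge> a - b / m"
proof (cases "a = 0")
  case True then show ?thesis using b m by (simp add: xlogx_def)
next
  case False
  then have ap: "a > 0" using a by simp
  then have bp: "b > 0" and L: "L = ln b" using ab by auto
  have mp: "m > 0" using am m False by force
  have "ln (b / (a * m)) \<le> b / (a * m) - 1" by (rule ln_le_minus_one) (use ap bp mp in simp)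
  moreover have "ln (b / (a * m)) = ln b - ln a - ln m" using ap bp mp by (simp add: ln_div ln_mult)
  ultimately have "ln b - ln a - ln m \<le> b / (a * m) - 1" by simp
  then have "a * (ln b - ln a - ln m) \<le> a * (b / (a * m) - 1)" using ap by (simp add: mult_left_mono)
  also have "a * (b / (a * m) - 1) = b / m - a" using ap mp by (simp add: field_simps)
  finally show ?thesis using L by (simp add: xlogx_eq algebra_simps)
qed

context setup_slc begin

lemma L2_props: assumes "S \<in> level E \<pi> 2"
  shows "card S = 2" "Q S > 0" "S \<subseteq> E" "S \<subseteq> V" "finite S"
proof -
  show c: "card S = 2" using assms by (simp add: level_def)
  show "Q S > 0" using assms Q_pos by (simp add: level_def)
  show "S \<subseteq> E" using assms level_sub by blast
  show "S \<subseteq> V" using assms level_sub[OF assms] by (auto simp: level_def V_def indep_def)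
  show "finite S" using c by (metis card.infinite zero_neq_numeral)
qed

lemma V_pos: "v \<in> V \<Longrightarrow> Q {v} > 0" using Q_pos by (auto simp: V_def level_def)

lemma up1_eq: assumes "v \<in> V"
  shows "up1 E r \<pi> f2 v = (\<Sum>S\<in>{S\<in>level E \<pi> 2. v \<in> S}. Q S / ((real r - 1) * Q {v}) * f2 S)"
  unfolding up1_def
proof (rule sum.cong)
  fix S assume "S \<in> {S\<in>level E \<pi> 2. v \<in> S}"
  then have c: "card S = 2" by (simp add: level_def)
  obtain k where k: "r = Suc (Suc k)" using r2 by (metis add_2_eq_Suc le_Suc_ex)
  have f: "fact (r - Suc 0) = (real r - 1) * fact (r - 2)"
    unfolding k by simp
  have "fact (r - 2) > (0::real)" by simp
  then show "weight E r \<pi> S / weight E r \<pi> {v} * f2 S = Q S / ((real r - 1) * Q {v}) * f2 S"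
    using c V_pos[OF assms] r2 by (simp add: weight_eq f field_simps)
qed simp

lemma p1f1: assumes "v \<in> V"
  shows "pi_k E r \<pi> 1 {v} * up1 E r \<pi> f2 v = (\<Sum>S\<in>{S\<in>level E \<pi> 2. v \<in> S}. pi_k E r \<pi> 2 S * f2 S / 2)"
proof -
  have qv: "Q {v} > 0" using V_pos assms by simp
  have r1: "real r - 1 > 0" using r2 by simp
  show ?thesis unfolding up1_eq[OF assms] pi1_eq sum_distrib_left
  proof (rule sum.cong)
    fix S assume "S \<in> {S\<in>level E \<pi> 2. v \<in> S}"
    then have c: "card S = 2" by (simp add: level_def)
    show "Q {v} / real r * (Q S / ((real r - 1) * Q {v}) * f2 S) = pi_k E r \<pi> 2 S * f2 S / 2"
      using qv r1 c by (simp add: pi2_eq field_simps)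
  qed simp
qed

lemma swapK:
  "(\<Sum>v\<in>V. pi_k E r \<pi> 1 {v} * up1 E r \<pi> f2 v * g v) =
   (\<Sum>S\<in>level E \<pi> 2. pi_k E r \<pi> 2 S * f2 S * (\<Sum>v\<in>S. g v)) / 2"
proof -
  have "(\<Sum>v\<in>V. pi_k E r \<pi> 1 {v} * up1 E r \<pi> f2 v * g v) =
        (\<Sum>v\<in>V. \<Sum>S\<in>{S\<in>level E \<pi> 2. v \<in> S}. pi_k E r \<pi> 2 S * f2 S / 2 * g v)"
  proof (rule sum.cong)
    fix v assume v: "v \<in> V"
    have "pi_k E r \<pi> 1 {v} * up1 E r \<pi> f2 v * g v = (\<Sum>S\<in>{S\<in>level E \<pi> 2. v \<in> S}. pi_k E r \<pi> 2 S * f2 S / 2) * g v"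
      by (simp only: p1f1[OF v])
    then show "pi_k E r \<pi> 1 {v} * up1 E r \<pi> f2 v * g v = (\<Sum>S\<in>{S\<in>level E \<pi> 2. v \<in> S}. pi_k E r \<pi> 2 S * f2 S / 2 * g v)"
      by (simp only: sum_distrib_right)
  qed simp
  also have "\<dots> = (\<Sum>S\<in>level E \<pi> 2. \<Sum>v\<in>{v\<in>V. v \<in> S}. pi_k E r \<pi> 2 S * f2 S / 2 * g v)"
    using sum.swap_restrict[of V "level E \<pi> 2" "\<lambda>v S. pi_k E r \<pi> 2 S * f2 S / 2 * g v" "\<lambda>v S. v \<in> S"]
      V_finite level_finite by simp
  also have "\<dots> = (\<Sum>S\<in>level E \<pi> 2. pi_k E r \<pi> 2 S * f2 S * (\<Sum>v\<in>S. g v) / 2)"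
  proof (rule sum.cong)
    fix S assume S: "S \<in> level E \<pi> 2"
    then have "{v\<in>V. v \<in> S} = S" using L2_props(4)[OF S] by auto
    then show "(\<Sum>v\<in>{v\<in>V. v \<in> S}. pi_k E r \<pi> 2 S * f2 S / 2 * g v) = pi_k E r \<pi> 2 S * f2 S * (\<Sum>v\<in>S. g v) / 2"
      by (simp add: sum_distrib_left sum_divide_distrib)
  qed simp
  finally show ?thesis by (simp add: sum_divide_distrib)
qed

end


context setup_slc begin

lemma main:
  assumes slc: "strongly_log_concave E \<pi>"
    and f2nn: "\<forall>S\<in>level E \<pi> 2. f2 S \<ge> 0"
  shows "Ent (level E \<pi> 2) (pi_k E r \<pi> 2) f2
           \<ge> 2 * Ent {v\<in>E. {v} \<in> level E \<pi> 1} (\<lambda>v. pi_k E r \<pi> 1 {v}) (up1 E r \<pi> f2)"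
proof -
  define L2 where "L2 = level E \<pi> 2"
  define p2 where "p2 = pi_k E r \<pi> 2"
  define p1 where "p1 = (\<lambda>v. pi_k E r \<pi> 1 {v})"
  define f1 where "f1 = up1 E r \<pi> f2"
  define m where "m = (\<Sum>S\<in>L2. p2 S * f2 S)"
  have rpos: "real r > 0" and r1: "real r - 1 > 0" using r2 by auto
  have finL2: "finite L2" using level_finite by (simp add: L2_def)
  have p2pos: "p2 S > 0" if "S \<in> L2" for S
    using L2_props[of S] that rpos r1 by (simp add: L2_def p2_def pi2_eq)
  have f2nn': "f2 S \<ge> 0" if "S \<in> L2" for S using f2nn that by (simp add: L2_def)
  have swap: "(\<Sum>v\<in>V. p1 v * f1 v * g v) = (\<Sum>S\<in>L2. p2 S * f2 S * (\<Sum>v\<in>S. g v)) / 2" for g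
    using swapK[of f2 g] by (simp add: p1_def f1_def p2_def L2_def)
  have hm: "(\<Sum>v\<in>V. p1 v * f1 v) = m"
  proof -
    have "(\<Sum>v\<in>V. p1 v * f1 v) = (\<Sum>v\<in>V. p1 v * f1 v * (\<lambda>_. 1) v)" by simp
    also have "\<dots> = (\<Sum>S\<in>L2. p2 S * f2 S * (\<Sum>v\<in>S. 1)) / 2" by (rule swap)
    also have "\<dots> = (\<Sum>S\<in>L2. 2 * (p2 S * f2 S)) / 2"
      by (intro arg_cong[where f = "\<lambda>x. x / 2"] sum.cong refl) (simp add: L2_props(1) L2_def)
    finally show ?thesis by (simp add: m_def sum_distrib_left[symmetric])
  qed
  have f1nn: "f1 v \<ge> 0" if "v \<in> V" for v
    unfolding f1_def up1_eq[OF that]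
    using V_pos[OF that] r1 Q_nonneg f2nn by (intro sum_nonneg) auto
  have f1pos: "f1 v > 0" if S: "S \<in> L2" "f2 S > 0" "v \<in> S" for S v
  proof -
    have v: "v \<in> V" using L2_props(4)[of S] S by (auto simp: L2_def)
    have "0 < Q S / ((real r - 1) * Q {v}) * f2 S"
      using L2_props(2)[of S] S V_pos[OF v] r1 by (simp add: L2_def)
    also have "\<dots> \<le> (\<Sum>S\<in>{S\<in>level E \<pi> 2. v \<in> S}. Q S / ((real r - 1) * Q {v}) * f2 S)"
      by (rule member_le_sum) (use S level_finite V_pos[OF v] r1 Q_nonneg f2nn in \<open>auto simp: L2_def\<close>)
    finally show ?thesis unfolding f1_def up1_eq[OF v] .
  qed
  have mnn: "m \<ge> 0" unfolding m_def using p2pos f2nn' by (intro sum_nonneg) (simp add: less_imp_le)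
  have m0: "f2 S = 0" if "m = 0" "S \<in> L2" for S
  proof -
    have "\<forall>S\<in>L2. p2 S * f2 S = 0"
      using that(1) unfolding m_def
      using sum_nonneg_eq_0_iff[OF finL2, of "\<lambda>S. p2 S * f2 S"] p2pos f2nn' by (simp add: less_imp_le)
    then show ?thesis using that(2) p2pos[OF that(2)] by auto
  qed
  have QB: "(\<Sum>S\<in>L2. p2 S * (\<Prod>v\<in>S. f1 v)) \<le> m\<^sup>2"
  proof -
    have "(\<Sum>S\<in>L2. p2 S * (\<Prod>v\<in>S. f1 v)) = 2 / (real r * (real r - 1)) * (\<Sum>S\<in>L2. Q S * (\<Prod>v\<in>S. f1 v))"
      unfolding sum_distrib_left
      by (rule sum.cong) (simp_all add: p2_def pi2_eq L2_def L2_props(1))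
    also have "\<dots> = 2 / (real r * (real r - 1)) * ((\<Sum>i\<in>E. \<Sum>j\<in>E. f1 i * f1 j * K i j) / 2)"
      by (simp add: L2_def level2_quad)
    also have "\<dots> \<le> 2 / (real r * (real r - 1)) * (((real r - 1) / real r * (\<Sum>i\<in>E. f1 i * Q {i})\<^sup>2) / 2)"
      using quad_bound[OF slc, of f1] rpos r1 by (intro mult_left_mono divide_right_mono) auto
    also have "(\<Sum>i\<in>E. f1 i * Q {i}) = real r * m"
    proof -
      have "(\<Sum>i\<in>E. f1 i * Q {i}) = (\<Sum>i\<in>E. Q {i} * f1 i)" by (simp add: mult.commute)
      also have "\<dots> = (\<Sum>i\<in>V. Q {i} * f1 i)" by (rule V_sum[symmetric])
      also have "\<dots> = real r * (\<Sum>v\<in>V. p1 v * f1 v)"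
      proof -
        have p1e: "p1 i = Q {i} / real r" for i unfolding p1_def by (rule pi1_eq)
        show ?thesis using rpos by (simp add: p1e sum_distrib_left)
      qed
      finally show ?thesis using hm by simp
    qed
    also have "2 / (real r * (real r - 1)) * (((real r - 1) / real r * (real r * m)\<^sup>2) / 2) = m\<^sup>2"
      using rpos r1 by (simp add: field_simps power2_eq_square)
    finally show ?thesis .
  qed
  have E1: "Ent V p1 f1 = (\<Sum>S\<in>L2. p2 S * f2 S * (\<Sum>v\<in>S. ln (f1 v))) / 2 - xlogx m"
  proof -
    have "(\<Sum>v\<in>V. p1 v * xlogx (f1 v)) = (\<Sum>v\<in>V. p1 v * f1 v * ln (f1 v))"
      by (simp add: xlogx_eq mult.assoc)
    also have "\<dots> = (\<Sum>S\<in>L2. p2 S * f2 S * (\<Sum>v\<in>S. ln (f1 v))) / 2" by (rule swap)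
    finally show ?thesis unfolding Ent_def hm by simp
  qed
  have E2: "Ent L2 p2 f2 = (\<Sum>S\<in>L2. p2 S * xlogx (f2 S)) - xlogx m"
    unfolding Ent_def m_def ..
  have key: "(\<Sum>S\<in>L2. p2 S * (xlogx (f2 S) - f2 S * (\<Sum>v\<in>S. ln (f1 v)) + f2 S * ln m)) \<ge> 0"
  proof -
    have "(\<Sum>S\<in>L2. p2 S * (f2 S - (\<Prod>v\<in>S. f1 v) / m))
        \<le> (\<Sum>S\<in>L2. p2 S * (xlogx (f2 S) - f2 S * (\<Sum>v\<in>S. ln (f1 v)) + f2 S * ln m))"
    proof (rule sum_mono)
      fix S assume S: "S \<in> L2"
      have SV: "S \<subseteq> V" and finS: "finite S" using L2_props[of S] S by (auto simp: L2_def)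
      have bnn: "(\<Prod>v\<in>S. f1 v) \<ge> 0" using f1nn SV by (intro prod_nonneg) auto
      have "f2 S - (\<Prod>v\<in>S. f1 v) / m \<le> xlogx (f2 S) - f2 S * (\<Sum>v\<in>S. ln (f1 v)) + f2 S * ln m"
      proof (rule term_ineq[OF f2nn'[OF S] bnn mnn])
        assume a: "f2 S > 0"
        have fp: "\<forall>v\<in>S. f1 v > 0" using f1pos[OF S a] by blast
        have "ln (\<Prod>v\<in>S. f1 v) = (\<Sum>v\<in>S. ln (f1 v))" by (rule ln_prod[OF finS]) (use fp in force)
        then show "(\<Prod>v\<in>S. f1 v) > 0 \<and> (\<Sum>v\<in>S. ln (f1 v)) = ln (\<Prod>v\<in>S. f1 v)"
          using fp by (simp add: prod_pos)
      next
        assume "m = 0" then show "f2 S = 0" using m0 S by blast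
      qed
      then show "p2 S * (f2 S - (\<Prod>v\<in>S. f1 v) / m)
        \<le> p2 S * (xlogx (f2 S) - f2 S * (\<Sum>v\<in>S. ln (f1 v)) + f2 S * ln m)"
        using p2pos[OF S] by (simp add: mult_left_mono)
    qed
    moreover have "(\<Sum>S\<in>L2. p2 S * (f2 S - (\<Prod>v\<in>S. f1 v) / m)) = m - (\<Sum>S\<in>L2. p2 S * (\<Prod>v\<in>S. f1 v)) / m"
      by (simp add: m_def right_diff_distrib sum_subtractf sum_divide_distrib)
    moreover have "m - (\<Sum>S\<in>L2. p2 S * (\<Prod>v\<in>S. f1 v)) / m \<ge> 0"
    proof (cases "m = 0")
      case True then show ?thesis by simp
    next
      case False
      then have mp: "m > 0" using mnn by simp
      have "(\<Sum>S\<in>L2. p2 S * (\<Prod>v\<in>S. f1 v)) / m \<le> m\<^sup>2 / m" using QB mp by (simp add: divide_right_mono)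
      also have "\<dots> = m" using mp by (simp add: power2_eq_square)
      finally show ?thesis by simp
    qed
    ultimately show ?thesis by linarith
  qed
  have split: "(\<Sum>S\<in>L2. p2 S * (xlogx (f2 S) - f2 S * (\<Sum>v\<in>S. ln (f1 v)) + f2 S * ln m))
     = (\<Sum>S\<in>L2. p2 S * xlogx (f2 S)) - (\<Sum>S\<in>L2. p2 S * f2 S * (\<Sum>v\<in>S. ln (f1 v))) + xlogx m"
    by (simp add: algebra_simps sum.distrib sum_subtractf m_def xlogx_eq sum_distrib_right)
  have VE: "{v\<in>E. {v} \<in> level E \<pi> 1} = V" by (simp add: V_def)
  show ?thesis
    unfolding VE p1_def[symmetric] f1_def[symmetric] L2_def[symmetric] p2_def[symmetric] E1 E2
  proof -
    have "2 * ((\<Sum>S\<in>L2. p2 S * f2 S * (\<Sum>v\<in>S. ln (f1 v))) / 2 - xlogx m)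
       = (\<Sum>S\<in>L2. p2 S * f2 S * (\<Sum>v\<in>S. ln (f1 v))) - 2 * xlogx m" by simp
    then show "2 * ((\<Sum>S\<in>L2. p2 S * f2 S * (\<Sum>v\<in>S. ln (f1 v))) / 2 - xlogx m)
       \<le> (\<Sum>S\<in>L2. p2 S * xlogx (f2 S)) - xlogx m"
      using key split by linarith
  qed
qed

end

theorem lemma4p2:
  fixes E :: "'a set" and r :: nat and \<pi> :: "'a set \<Rightarrow> real" and f2 :: "'a set \<Rightarrow> real"
  assumes "finite E"
    and "r \<ge> 2"
    and "homogeneous_distribution E r \<pi>"
    and "strongly_log_concave E \<pi>"
    and "\<forall>S\<in>level E \<pi> 2. f2 S \<ge> 0"
  shows "Ent (level E \<pi> 2) (pi_k E r \<pi> 2) f2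
           \<ge> 2 * Ent {v\<in>E. {v} \<in> level E \<pi> 1} (\<lambda>v. pi_k E r \<pi> 1 {v}) (up1 E r \<pi> f2)"
proof -
  interpret setup_slc E r \<pi> using assms(1-3) by unfold_locales
  show ?thesis using main[OF assms(4,5)] .
qed

end
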